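(* Let $\mathbb F_q$ be a finite field with $q$ elements, let $n\ge 2$, let $a_1,\dots,a_n,b\in\mathbb F_q^*$ and let $k,k_1,\dots,k_n,m_1,\dots,m_n$ be positive integers. Let $N_q$ be the number of solutions $(x_1,\dots,x_n)\in\mathbb F_q^n$ of $$(a_1x_1^{m_1}+\dots+a_nx_n^{m_n})^k=bx_1^{k_1}\cdots x_n^{k_n},$$ and let $N_q(0)$ and $N_q^*(0)$ be the numbers of solutions of $a_1x_1^{m_1}+\dots+a_nx_n^{m_n}=0$ in $\mathbb F_q^n$ and in $(\mathbb F_q^* )^n$ respectively. If $b$ is a $k_0$th power in $\mathbb F_q$, then $$N_q=k_0(q-1)^{n-1}+N_q(0)-\frac{k_0+q-1}{q-1}\,N_q^*(0)+\sum_{\substack{\psi^d=\varepsilon\\ \psi^{k_0}\ne\varepsilon}}\psi(b)T(\psi),$$ where the sum is over all multiplicative characters $\psi$ of $\mathbb F_q$ whose order divides $d$ but does not divide $k_0$.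
   Context: $k_0=\gcd(k,k_1,\dots,k_n,q-1)$; $M=\mathrm{lcm}[m_1,\dots,m_n]$; $d_j=\gcd(m_j,q-1)$ for $j=1,\dots,n$; $$d=\gcd\Bigl(\sum_{j=1}^n\frac{k_jM}{m_j}-kM,\ \frac{k_1(q-1)}{d_1},\dots,\frac{k_n(q-1)}{d_n},\ q-1\Bigr).$$ $\varepsilon$ denotes the trivial multiplicative character of $\mathbb F_q$. A multiplicative character $\psi$ is extended to $\mathbb F_q$ by $\psi(0)=1$ if $\psi$ is trivial and $\psi(0)=0$ otherwise. For a multiplicative character $\psi$, $$T(\psi)=\frac1{q-1}\sum_{\substack{x_1,\dots,x_n\in\mathbb F_q^*\\ a_1x_1^{m_1}+\dots+a_nx_n^{m_n}\ne0}}\psi^{k_1}(x_1)\cdots\psi^{k_n}(x_n)\,\bar\psi^{k}(a_1x_1^{m_1}+\dots+a_nx_n^{m_n}).$$ *)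

theory Defs
  imports Complex_Main "HOL-Library.FuncSet"
begin

definition mult_chars :: "('a::field \<Rightarrow> complex) set" where
  "mult_chars = {\<psi>. (\<forall>x y. x \<noteq> 0 \<longrightarrow> y \<noteq> 0 \<longrightarrow> \<psi> (x * y) = \<psi> x * \<psi> y)
                   \<and> (\<forall>x. x \<noteq> 0 \<longrightarrow> \<psi> x \<noteq> 0)
                   \<and> \<psi> 0 = (if (\<forall>x. x \<noteq> 0 \<longrightarrow> \<psi> x = 1) then 1 else 0)}"

definition char_pow_trivial :: "('a::field \<Rightarrow> complex) \<Rightarrow> nat \<Rightarrow> bool" where
  "char_pow_trivial \<psi> e \<longleftrightarrow> (\<forall>x. x \<noteq> 0 \<longrightarrow> \<psi> x ^ e = 1)"

definition diag_form :: "nat \<Rightarrow> (nat \<Rightarrow> 'a::field) \<Rightarrow> (nat \<Rightarrow> nat) \<Rightarrow> (nat \<Rightarrow> 'a) \<Rightarrow> 'a" where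
  "diag_form n a m x = (\<Sum>j\<in>{1..n}. a j * x j ^ m j)"

definition k0_of :: "nat \<Rightarrow> nat \<Rightarrow> (nat \<Rightarrow> nat) \<Rightarrow> nat \<Rightarrow> nat" where
  "k0_of q n kk k = gcd (gcd k (q - 1)) (Gcd (kk ` {1..n}))"

text \<open>d = gcd(sum_j k_j M/m_j - k M, k_1(q-1)/d_1, ..., k_n(q-1)/d_n, q-1),
  with M = lcm(m_1,...,m_n) and d_j = gcd(m_j, q-1).\<close>
definition d_of :: "nat \<Rightarrow> nat \<Rightarrow> (nat \<Rightarrow> nat) \<Rightarrow> (nat \<Rightarrow> nat) \<Rightarrow> nat \<Rightarrow> nat" where
  "d_of q n kk m k =
     (let M = Lcm (m ` {1..n}) in
      nat (gcd (gcd ((\<Sum>j\<in>{1..n}. int (kk j * (M div m j))) - int (k * M)) (int (q - 1)))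
               (int (Gcd ((\<lambda>j. kk j * (q - 1) div gcd (m j) (q - 1)) ` {1..n})))))"

definition T_sum :: "nat \<Rightarrow> (nat \<Rightarrow> 'a::{finite,field}) \<Rightarrow> (nat \<Rightarrow> nat) \<Rightarrow> (nat \<Rightarrow> nat)
                     \<Rightarrow> nat \<Rightarrow> ('a \<Rightarrow> complex) \<Rightarrow> complex" where
  "T_sum n a m kk k \<psi> =
     (1 / of_nat (card (UNIV :: 'a set) - 1)) *
     (\<Sum>x\<in>{x \<in> Pi\<^sub>E {1..n} (\<lambda>_. UNIV - {0}). diag_form n a m x \<noteq> 0}.
        (\<Prod>j\<in>{1..n}. \<psi> (x j) ^ kk j) * cnj (\<psi> (diag_form n a m x)) ^ k)"

end

theory Submission
  imports Defs "HOL-Algebra.Multiplicative_Group"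
begin


definition rtype :: "'a::field ring" where
  "rtype = \<lparr>carrier = UNIV, monoid.mult = (\<lambda>x y. x * y), one = 1, ring.zero = 0, add = (\<lambda>x y. x + y)\<rparr>"

lemma cring_rtype: "cring (rtype :: 'a::field ring)"
proof (rule cringI)
  show "abelian_group (rtype :: 'a ring)"
    by (rule abelian_groupI) (auto simp: rtype_def algebra_simps intro: exI[of _ "- _"])
  show "comm_monoid (rtype :: 'a ring)"
    by (rule comm_monoidI) (auto simp: rtype_def algebra_simps)
qed (simp add: rtype_def algebra_simps)

lemma field_rtype: "field (rtype :: 'a::field ring)"
proof -
  interpret cring "rtype :: 'a ring" by (rule cring_rtype)
  show ?thesis
  proof (rule cring_fieldI2)
    show "\<zero>\<^bsub>rtype\<^esub> \<noteq> \<one>\<^bsub>rtype\<^esub>" by (simp add: rtype_def)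
    fix a :: 'a assume "a \<in> carrier rtype" "a \<noteq> \<zero>\<^bsub>rtype\<^esub>"
    then show "\<exists>b\<in>carrier rtype. a \<otimes>\<^bsub>rtype\<^esub> b = \<one>\<^bsub>rtype\<^esub>"
      by (intro bexI[of _ "inverse a"]) (simp_all add: rtype_def)
  qed
qed

lemma rtype_pow: "x [^]\<^bsub>rtype\<^esub> (i::nat) = (x::'a::field) ^ i"
  by (induction i) (simp_all add: rtype_def nat_pow_def mult.commute)

lemma ff_gen: "\<exists>g::'a::{finite,field}. g \<noteq> 0 \<and> (\<forall>y. y \<noteq> 0 \<longrightarrow> (\<exists>i. y = g ^ i))"
proof -
  have "finite (carrier (rtype :: 'a ring))" by (simp add: rtype_def)
  from field.finite_field_mult_group_has_gen[OF field_rtype this] obtain a where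
    a: "a \<in> carrier (mult_of (rtype::'a ring))" and
    c: "carrier (mult_of (rtype::'a ring)) = {a[^]\<^bsub>rtype\<^esub>i | i::nat . i \<in> UNIV}"
    by blast
  have z: "\<zero>\<^bsub>rtype\<^esub> = (0::'a)" by (simp add: rtype_def)
  have cr: "carrier (rtype::'a ring) = UNIV" by (simp add: rtype_def)
  have cm: "carrier (mult_of (rtype::'a ring)) = UNIV - {0}" by (simp add: z cr)
  show ?thesis
  proof (intro exI[of _ a] conjI allI impI)
    show "a \<noteq> 0" using a cm by blast
    fix y :: 'a assume "y \<noteq> 0"
    then have "y \<in> {a[^]\<^bsub>rtype\<^esub>i | i::nat . i \<in> UNIV}" using c cm by blast
    then obtain i where "y = a[^]\<^bsub>rtype\<^esub>(i::nat)" by blast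
    then show "\<exists>i. y = a ^ i" unfolding rtype_pow by blast
  qed
qed




lemma card_ff_ge2: "card (UNIV :: 'a::{finite,field} set) \<ge> 2"
proof -
  have "{0, 1::'a} \<subseteq> UNIV" by simp
  then have "card {0, 1::'a} \<le> card (UNIV :: 'a set)" by (intro card_mono) auto
  then show ?thesis by simp
qed

lemma card_U: "card (UNIV - {0::'a::{finite,field}}) = card (UNIV :: 'a set) - 1"
  by (simp add: card_Diff_singleton)

lemma fermat_ff:
  fixes y :: "'a::{finite,field}"
  assumes "y \<noteq> 0"
  shows "y ^ (card (UNIV :: 'a set) - 1) = 1"
proof -
  define U where "U = (UNIV - {0::'a})"
  have bij: "bij_betw (\<lambda>x. y * x) U U"
    by (rule bij_betw_byWitness[where f' = "\<lambda>x. x / y"]) (use assms in \<open>auto simp: U_def\<close>)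
  have "prod (\<lambda>x. x) U = prod (\<lambda>x. y * x) U"
    using prod.reindex_bij_betw[OF bij, of "\<lambda>x. x"] by simp
  also have "\<dots> = y ^ card U * prod (\<lambda>x. x) U"
    by (simp add: prod.distrib)
  finally have "y ^ card U = 1"
    using prod_zero_iff[of U "\<lambda>x. x"] by (auto simp: U_def)
  then show ?thesis by (simp add: U_def card_U)
qed

locale ffc =
  fixes g :: "'a::{finite,field}"
  assumes g0: "g \<noteq> 0" and gen: "\<And>y. y \<noteq> 0 \<Longrightarrow> \<exists>i. y = g ^ i"
begin

definition NN :: nat where "NN = card (UNIV :: 'a set) - 1"

lemma NN_pos: "NN > 0" using card_ff_ge2[where 'a='a] by (simp add: NN_def)

lemma gN: "g ^ NN = 1" unfolding NN_def by (rule fermat_ff[OF g0])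

lemma pow_mod_N:
  fixes x :: "'b::monoid_mult"
  assumes "x ^ NN = 1" shows "x ^ (t mod NN) = x ^ t"
proof -
  have "t = NN * (t div NN) + t mod NN" by simp
  then have "x ^ t = (x ^ NN) ^ (t div NN) * x ^ (t mod NN)" by (metis power_add power_mult)
  then show ?thesis using assms by simp
qed

lemma bij_log: "bij_betw (\<lambda>t. g ^ t) {..<NN} (UNIV - {0})"
proof -
  have sub: "(\<lambda>t. g ^ t) ` {..<NN} = UNIV - {0}"
  proof
    show "(\<lambda>t. g ^ t) ` {..<NN} \<subseteq> UNIV - {0}" using g0 by auto
    show "UNIV - {0} \<subseteq> (\<lambda>t. g ^ t) ` {..<NN}"
    proof
      fix y assume "y \<in> UNIV - {0::'a}"
      then obtain i where "y = g ^ i" using gen by blast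
      then have "y = g ^ (i mod NN)" using pow_mod_N[OF gN] by simp
      moreover have "i mod NN < NN" using NN_pos by simp
      ultimately show "y \<in> (\<lambda>t. g ^ t) ` {..<NN}" by blast
    qed
  qed
  have "card ((\<lambda>t. g ^ t) ` {..<NN}) = card {..<NN}"
    unfolding sub by (simp add: card_U NN_def)
  then have "inj_on (\<lambda>t. g ^ t) {..<NN}" by (intro eq_card_imp_inj_on) auto
  with sub show ?thesis by (simp add: bij_betw_def)
qed

definition dlog :: "'a \<Rightarrow> nat" where "dlog y = the_inv_into {..<NN} (\<lambda>t. g ^ t) y"

lemma dlog: "y \<noteq> 0 \<Longrightarrow> dlog y < NN \<and> g ^ dlog y = y"
proof -
  assume y: "y \<noteq> 0"
  then have yU: "y \<in> UNIV - {0}" by simp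
  have "the_inv_into {..<NN} (\<lambda>t. g ^ t) y \<in> {..<NN}"
    using bij_betwE[OF bij_betw_the_inv_into[OF bij_log]] yU by blast
  moreover have "g ^ (the_inv_into {..<NN} (\<lambda>t. g ^ t) y) = y"
    using f_the_inv_into_f_bij_betw[OF bij_log yU] .
  ultimately show ?thesis unfolding dlog_def by simp
qed

lemma dlog_pow: "dlog (g ^ t) = t mod NN"
proof -
  have "g ^ t = g ^ (t mod NN)" using pow_mod_N[OF gN] by simp
  moreover have "t mod NN < NN" using NN_pos by simp
  ultimately show ?thesis unfolding dlog_def using bij_log
    by (simp add: bij_betw_def the_inv_into_f_f)
qed

definition RR :: "complex set" where "RR = {z. z ^ NN = 1}"

lemma RR_fin: "finite RR" unfolding RR_def using NN_pos by (intro finite_roots_unity) auto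
lemma RR_card: "card RR = NN" unfolding RR_def using NN_pos by (rule card_roots_unity_eq)
lemma RR_nz: "z \<in> RR \<Longrightarrow> z \<noteq> 0" unfolding RR_def using NN_pos by (auto simp: zero_power)

lemma RR_cnj: assumes "z \<in> RR" shows "cnj z * z = 1"
proof -
  have "norm z ^ NN = 1" using assms by (simp add: RR_def flip: norm_power)
  then have "norm z ^ NN = 1 ^ NN" by simp
  then have "norm z = 1" using NN_pos by (metis norm_ge_zero power_eq_imp_eq_base zero_le_one)
  then show ?thesis by (metis complex_norm_square mult.commute of_real_1 power_one)
qed

definition chi :: "complex \<Rightarrow> 'a \<Rightarrow> complex" where
  "chi z y = (if y = 0 then (if z = 1 then 1 else 0) else z ^ dlog y)"

lemma chi_gpow: "z \<in> RR \<Longrightarrow> chi z (g ^ t) = z ^ t"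
  using g0 pow_mod_N[of z t] by (simp add: chi_def dlog_pow RR_def)

lemma chi_g: "z \<in> RR \<Longrightarrow> chi z g = z"
  using chi_gpow[of z 1] by simp

lemma chi_mult: assumes "z \<in> RR" shows "chi z (x * y) = chi z x * chi z y"
proof (cases "x = 0 \<or> y = 0")
  case True then show ?thesis by (auto simp: chi_def)
next
  case False
  then have "x * y = g ^ (dlog x + dlog y)" using dlog by (simp add: power_add)
  then have "chi z (x * y) = z ^ (dlog x + dlog y)" using chi_gpow[OF assms] by simp
  then show ?thesis using False by (simp add: chi_def power_add)
qed

lemma chi_one: "z \<in> RR \<Longrightarrow> chi z 1 = 1"
  using chi_gpow[of z 0] by simp

lemma chi_power: "z \<in> RR \<Longrightarrow> chi z (x ^ e) = chi z x ^ e"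
  by (induction e) (simp_all add: chi_one chi_mult)

lemma chi_prod: "z \<in> RR \<Longrightarrow> chi z (prod f A) = (\<Prod>j\<in>A. chi z (f j))"
  by (induction A rule: infinite_finite_induct) (simp_all add: chi_one chi_mult)

lemma chi_nz: "z \<in> RR \<Longrightarrow> x \<noteq> 0 \<Longrightarrow> chi z x \<noteq> 0"
  using RR_nz by (simp add: chi_def)

lemma chi_cnj: "z \<in> RR \<Longrightarrow> x \<noteq> 0 \<Longrightarrow> cnj (chi z x) * chi z x = 1"
proof -
  assume z: "z \<in> RR" and x: "x \<noteq> 0"
  have "cnj (chi z x) * chi z x = (cnj z * z) ^ dlog x" using x by (simp add: chi_def power_mult_distrib)
  then show ?thesis using RR_cnj[OF z] by simp
qed

lemma chi_triv_iff: assumes "z \<in> RR" shows "(\<forall>x. x \<noteq> 0 \<longrightarrow> chi z x ^ e = 1) \<longleftrightarrow> z ^ e = 1"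
proof
  assume "\<forall>x. x \<noteq> 0 \<longrightarrow> chi z x ^ e = 1"
  then show "z ^ e = 1" using g0 chi_g[OF assms] by metis
next
  assume "z ^ e = 1"
  then show "\<forall>x. x \<noteq> 0 \<longrightarrow> chi z x ^ e = 1"
    by (simp add: chi_def flip: power_mult) (simp add: mult.commute power_mult)
qed

lemma chi_in: assumes "z \<in> RR" shows "chi z \<in> mult_chars"
proof -
  have "(\<forall>x. x \<noteq> 0 \<longrightarrow> chi z x = 1) \<longleftrightarrow> z = 1"
    using chi_triv_iff[OF assms, of 1] by simp
  then have "chi z 0 = (if (\<forall>x. x \<noteq> 0 \<longrightarrow> chi z x = 1) then 1 else 0)"
    by (simp add: chi_def)
  then show ?thesis unfolding mult_chars_def
    using chi_mult[OF assms] chi_nz[OF assms] by blast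
qed

lemma mc_one: assumes "\<psi> \<in> mult_chars" shows "\<psi> 1 = 1"
proof -
  have h1: "\<forall>x y. x \<noteq> 0 \<longrightarrow> y \<noteq> 0 \<longrightarrow> \<psi> (x * y) = \<psi> x * \<psi> y"
    and h2: "\<forall>x. x \<noteq> 0 \<longrightarrow> \<psi> x \<noteq> 0" using assms unfolding mult_chars_def by blast+
  have "\<psi> (1 * 1) = \<psi> 1 * \<psi> 1" by (rule h1[rule_format]) simp_all
  moreover have "\<psi> 1 \<noteq> 0" using h2 by simp
  ultimately show ?thesis by simp
qed

lemma mc_pow: assumes "\<psi> \<in> mult_chars" shows "\<psi> (g ^ t) = \<psi> g ^ t"
proof (induction t)
  case 0 then show ?case using mc_one[OF assms] by simp
next
  case (Suc t)
  have "\<psi> (g ^ Suc t) = \<psi> g * \<psi> (g ^ t)" using assms g0 unfolding mult_chars_def by simp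
  then show ?case using Suc by simp
qed

lemma mc_chi: assumes "\<psi> \<in> mult_chars" shows "\<psi> g \<in> RR" "\<psi> = chi (\<psi> g)"
proof -
  show z: "\<psi> g \<in> RR" using mc_pow[OF assms, of NN] gN mc_one[OF assms] by (simp add: RR_def)
  have nz: "\<psi> x = \<psi> g ^ dlog x" if "x \<noteq> 0" for x using mc_pow[OF assms, of "dlog x"] dlog[OF that] by simp
  have iff: "(\<forall>x. x \<noteq> 0 \<longrightarrow> \<psi> x = 1) \<longleftrightarrow> \<psi> g = 1"
  proof
    assume "\<forall>x. x \<noteq> 0 \<longrightarrow> \<psi> x = 1" then show "\<psi> g = 1" using g0 by blast
  next
    assume "\<psi> g = 1" then show "\<forall>x. x \<noteq> 0 \<longrightarrow> \<psi> x = 1" using nz by simp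
  qed
  have h0: "\<psi> 0 = (if (\<forall>x. x \<noteq> 0 \<longrightarrow> \<psi> x = 1) then 1 else 0)"
    using assms unfolding mult_chars_def by blast
  then have "\<psi> 0 = (if \<psi> g = 1 then 1 else 0)" by (simp only: iff)
  then show "\<psi> = chi (\<psi> g)"
  proof -
    assume h: "\<psi> 0 = (if \<psi> g = 1 then 1 else 0)"
    show ?thesis
    proof
      fix x show "\<psi> x = chi (\<psi> g) x"
      proof (cases "x = 0")
        case True then show ?thesis by (simp add: h chi_def)
      next
        case False then show ?thesis using nz[OF False] by (simp add: chi_def)
      qed
    qed
  qed
qed

lemma chi_bij: "bij_betw chi RR mult_chars"
proof -
  have "inj_on chi RR"
  proof (rule inj_onI)
    fix x y assume "x \<in> RR" "y \<in> RR" "chi x = chi y"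
    then have "x = chi x g" "chi y g = y" using chi_g by (metis, metis)
    then show "x = y" using \<open>chi x = chi y\<close> by simp
  qed
  moreover have "chi ` RR = mult_chars"
  proof
    show "chi ` RR \<subseteq> mult_chars" using chi_in by blast
    show "mult_chars \<subseteq> chi ` RR"
    proof
      fix \<psi> :: "'a \<Rightarrow> complex" assume h: "\<psi> \<in> mult_chars"
      show "\<psi> \<in> chi ` RR" using image_eqI[where f=chi and x="\<psi> g", OF mc_chi(2)[OF h] mc_chi(1)[OF h]] .
    qed
  qed
  ultimately show ?thesis by (simp add: bij_betw_def)
qed

lemma orth: assumes "w \<noteq> 0" shows "(\<Sum>z\<in>RR. chi z w) = (if w = 1 then of_nat NN else 0)"
proof (cases "w = 1")
  case True then show ?thesis using chi_one RR_card by simp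
next
  case False
  define t where "t = dlog w"
  have t1: "t < NN" using dlog[OF assms] by (simp add: t_def)
  have t0: "t \<noteq> 0"
  proof
    assume "t = 0" then have "w = g ^ 0" using dlog[OF assms] by (simp add: t_def)
    then show False using False by simp
  qed
  have "\<exists>\<zeta>\<in>RR. \<zeta> ^ t \<noteq> 1"
  proof (rule ccontr)
    assume "\<not> ?thesis"
    then have "RR \<subseteq> {z. z ^ t = 1}" by auto
    then have "card RR \<le> card {z::complex. z ^ t = 1}" using t0 by (intro card_mono finite_roots_unity) auto
    moreover have "card {z::complex. z ^ t = 1} = t" using t0 by (intro card_roots_unity_eq) simp
    ultimately show False using t1 RR_card by linarith
  qed
  then obtain \<zeta> where \<zeta>: "\<zeta> \<in> RR" "\<zeta> ^ t \<noteq> 1" by blast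
  have z0: "\<zeta> \<noteq> 0" using RR_nz[OF \<zeta>(1)] .
  have bij: "bij_betw (\<lambda>z. \<zeta> * z) RR RR"
  proof (rule bij_betw_byWitness[where f' = "\<lambda>z. z / \<zeta>"])
    show "\<forall>a\<in>RR. \<zeta> * a / \<zeta> = a" using z0 by simp
    show "\<forall>a\<in>RR. \<zeta> * (a / \<zeta>) = a" using z0 by simp
    show "(\<lambda>z. \<zeta> * z) ` RR \<subseteq> RR" using \<zeta>(1) by (auto simp: RR_def power_mult_distrib)
    show "(\<lambda>z. z / \<zeta>) ` RR \<subseteq> RR" using \<zeta>(1) by (auto simp: RR_def power_divide)
  qed
  define S where "S = (\<Sum>z\<in>RR. z ^ t)"
  have "S = (\<Sum>z\<in>RR. (\<zeta> * z) ^ t)"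
    unfolding S_def using sum.reindex_bij_betw[OF bij, of "\<lambda>z. z ^ t"] by simp
  also have "\<dots> = \<zeta> ^ t * S" unfolding S_def by (simp add: power_mult_distrib sum_distrib_left)
  finally have e: "S = \<zeta> ^ t * S" .
  have "(1 - \<zeta> ^ t) * S = S - \<zeta> ^ t * S" by (simp add: left_diff_distrib)
  also have "\<dots> = 0" using e by simp
  finally have "S = 0" using \<zeta>(2) by simp
  moreover have "(\<Sum>z\<in>RR. chi z w) = S" unfolding S_def using assms by (simp add: chi_def t_def)
  ultimately show ?thesis using False by simp
qed

end



lemma powi_gcd:
  fixes z :: complex
  assumes "z \<noteq> 0" "z powi a = 1" "z powi b = 1" shows "z powi (gcd a b) = 1"
proof -
  obtain u v where uv: "u * a + v * b = gcd a b" using bezout_int by blast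
  have "z powi (u * a + v * b) = z powi (a * u) * z powi (b * v)"
    using assms(1) by (simp add: power_int_add mult.commute)
  also have "\<dots> = 1" using assms by (simp add: power_int_mult)
  finally show ?thesis using uv by simp
qed

lemma pow_gcd_nat:
  fixes z :: complex
  assumes "z \<noteq> 0" "z ^ a = 1" "z ^ b = 1" shows "z ^ (gcd a b) = 1"
proof -
  have "z powi (gcd (int a) (int b)) = 1" using powi_gcd[of z "int a" "int b"] assms by simp
  then show ?thesis by simp
qed

lemma pow_Gcd:
  fixes z :: complex
  assumes "finite A" "z \<noteq> 0" "\<forall>c\<in>A. z ^ c = 1" shows "z ^ (Gcd A) = 1"
  using assms(1,3)
proof (induction A rule: finite_induct)
  case empty then show ?case by simp
next
  case (insert x F)
  then show ?case using pow_gcd_nat[OF assms(2)] by simp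
qed

context ffc
begin

definition Tp :: "nat \<Rightarrow> (nat \<Rightarrow> 'a) \<Rightarrow> (nat \<Rightarrow> nat) \<Rightarrow> (nat \<Rightarrow> nat) \<Rightarrow> nat \<Rightarrow> complex \<Rightarrow> complex" where
  "Tp n a m kk k z = (\<Sum>x\<in>{x \<in> Pi\<^sub>E {1..n} (\<lambda>_. UNIV - {0}). diag_form n a m x \<noteq> 0}.
        (\<Prod>j\<in>{1..n}. chi z (x j) ^ kk j) * cnj (chi z (diag_form n a m x)) ^ k)"

lemma T_sum_chi: "T_sum n a m kk k (chi z) = Tp n a m kk k z / of_nat NN"
  by (simp add: T_sum_def Tp_def NN_def)

lemma diag_scale:
  assumes "\<forall>j\<in>{1..n}. c j ^ m j = \<mu>"
  shows "diag_form n a m (restrict (\<lambda>j. c j * x j) {1..n}) = \<mu> * diag_form n a m x"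
proof -
  have "diag_form n a m (restrict (\<lambda>j. c j * x j) {1..n}) = (\<Sum>j\<in>{1..n}. \<mu> * (a j * x j ^ m j))"
    unfolding diag_form_def
  proof (rule sum.cong)
    fix j assume j: "j \<in> {1..n}"
    then have "restrict (\<lambda>j. c j * x j) {1..n} j = c j * x j" by simp
    then show "a j * restrict (\<lambda>j. c j * x j) {1..n} j ^ m j = \<mu> * (a j * x j ^ m j)"
      using assms j by (simp add: power_mult_distrib)
  qed simp
  then show ?thesis by (simp add: diag_form_def sum_distrib_left)
qed

lemma Tp_scale:
  assumes z: "z \<in> RR" and c: "\<forall>j\<in>{1..n}. c j \<noteq> 0 \<and> c j ^ m j = \<mu>" and mu: "\<mu> \<noteq> 0"
  shows "Tp n a m kk k z = ((\<Prod>j\<in>{1..n}. chi z (c j) ^ kk j) * cnj (chi z \<mu>) ^ k) * Tp n a m kk k z"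
proof -
  define S where "S = {x \<in> Pi\<^sub>E {1..n} (\<lambda>_. UNIV - {0::'a}). diag_form n a m x \<noteq> 0}"
  define \<sigma> where "\<sigma> x = restrict (\<lambda>j. c j * x j) {1..n}" for x :: "nat \<Rightarrow> 'a"
  define \<sigma>' where "\<sigma>' x = restrict (\<lambda>j. inverse (c j) * x j) {1..n}" for x :: "nat \<Rightarrow> 'a"
  define f where "f x = (\<Prod>j\<in>{1..n}. chi z (x j) ^ kk j) * cnj (chi z (diag_form n a m x)) ^ k"
    for x :: "nat \<Rightarrow> 'a"
  have c': "\<forall>j\<in>{1..n}. inverse (c j) ^ m j = inverse \<mu>" using c by (simp add: power_inverse)
  have D1: "diag_form n a m (\<sigma> x) = \<mu> * diag_form n a m x" for x
    unfolding \<sigma>_def using c diag_scale[of n c m \<mu> a x] by blast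
  have D2: "diag_form n a m (\<sigma>' x) = inverse \<mu> * diag_form n a m x" for x
    unfolding \<sigma>'_def using diag_scale[OF c', of a x] .
  have bij: "bij_betw \<sigma> S S"
  proof (rule bij_betw_byWitness[where f' = \<sigma>'])
    show "\<forall>x\<in>S. \<sigma>' (\<sigma> x) = x"
    proof
      fix x assume "x \<in> S"
      then have x: "x \<in> Pi\<^sub>E {1..n} (\<lambda>_. UNIV - {0})" unfolding S_def by blast
      show "\<sigma>' (\<sigma> x) = x"
      proof
        fix j show "\<sigma>' (\<sigma> x) j = x j"
        proof (cases "j \<in> {1..n}")
          case True
          then have "c j \<noteq> 0" using c by blast
          then show ?thesis using True by (simp add: \<sigma>_def \<sigma>'_def)
        next
          case False
          then have "x j = undefined" using x by (rule PiE_arb[rotated])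
          moreover have "\<sigma>' y j = undefined" "\<sigma> y j = undefined" for y
            unfolding \<sigma>_def \<sigma>'_def using False by auto
          ultimately show ?thesis by simp
        qed
      qed
    qed
    show "\<forall>x\<in>S. \<sigma> (\<sigma>' x) = x"
    proof
      fix x assume "x \<in> S"
      then have x: "x \<in> Pi\<^sub>E {1..n} (\<lambda>_. UNIV - {0})" unfolding S_def by blast
      show "\<sigma> (\<sigma>' x) = x"
      proof
        fix j show "\<sigma> (\<sigma>' x) j = x j"
        proof (cases "j \<in> {1..n}")
          case True
          then have "c j \<noteq> 0" using c by blast
          then show ?thesis using True by (simp add: \<sigma>_def \<sigma>'_def)
        next
          case False
          then have "x j = undefined" using x by (rule PiE_arb[rotated])
          moreover have "\<sigma>' y j = undefined" "\<sigma> y j = undefined" for y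
            unfolding \<sigma>_def \<sigma>'_def using False by auto
          ultimately show ?thesis by simp
        qed
      qed
    qed
    show "\<sigma> ` S \<subseteq> S"
    proof
      fix y assume "y \<in> \<sigma> ` S"
      then obtain x where x: "x \<in> S" "y = \<sigma> x" by blast
      have "y \<in> Pi\<^sub>E {1..n} (\<lambda>_. UNIV - {0})" using x c by (auto simp: S_def \<sigma>_def PiE_iff)
      moreover have "diag_form n a m y \<noteq> 0" using x D1 mu by (simp add: S_def)
      ultimately show "y \<in> S" by (simp add: S_def)
    qed
    show "\<sigma>' ` S \<subseteq> S"
    proof
      fix y assume "y \<in> \<sigma>' ` S"
      then obtain x where x: "x \<in> S" "y = \<sigma>' x" by blast
      have "y \<in> Pi\<^sub>E {1..n} (\<lambda>_. UNIV - {0})" using x c by (auto simp: S_def \<sigma>'_def PiE_iff)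
      moreover have "diag_form n a m y \<noteq> 0" using x D2 mu by (simp add: S_def)
      ultimately show "y \<in> S" by (simp add: S_def)
    qed
  qed
  define K where "K = (\<Prod>j\<in>{1..n}. chi z (c j) ^ kk j) * cnj (chi z \<mu>) ^ k"
  have fs: "f (\<sigma> x) = K * f x" if "x \<in> S" for x
  proof -
    have p: "(\<Prod>j\<in>{1..n}. chi z (\<sigma> x j) ^ kk j) = (\<Prod>j\<in>{1..n}. chi z (c j) ^ kk j) * (\<Prod>j\<in>{1..n}. chi z (x j) ^ kk j)"
    proof -
      have "(\<Prod>j\<in>{1..n}. chi z (\<sigma> x j) ^ kk j) = (\<Prod>j\<in>{1..n}. chi z (c j) ^ kk j * chi z (x j) ^ kk j)"
        by (rule prod.cong) (simp_all add: \<sigma>_def chi_mult[OF z] power_mult_distrib)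
      then show ?thesis by (simp add: prod.distrib)
    qed
    have q: "cnj (chi z (diag_form n a m (\<sigma> x))) ^ k = cnj (chi z \<mu>) ^ k * cnj (chi z (diag_form n a m x)) ^ k"
      by (simp add: D1 chi_mult[OF z] power_mult_distrib)
    show ?thesis unfolding f_def K_def p q by (simp add: algebra_simps)
  qed
  have "Tp n a m kk k z = sum f S" by (simp add: Tp_def f_def S_def)
  also have "\<dots> = (\<Sum>x\<in>S. f (\<sigma> x))" using sum.reindex_bij_betw[OF bij, of f] by simp
  also have "\<dots> = (\<Sum>x\<in>S. K * f x)" by (rule sum.cong) (simp_all add: fs)
  also have "\<dots> = K * Tp n a m kk k z" by (simp add: sum_distrib_left Tp_def f_def S_def)
  finally show ?thesis unfolding K_def .
qed

end



context ffc
begin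

lemma K_one:
  assumes z: "z \<in> RR" and nz: "Tp n a m kk k z \<noteq> 0"
    and c: "\<forall>j\<in>{1..n}. c j \<noteq> 0 \<and> c j ^ m j = \<mu>" and mu: "\<mu> \<noteq> 0"
  shows "(\<Prod>j\<in>{1..n}. chi z (c j) ^ kk j) * cnj (chi z \<mu>) ^ k = 1"
proof -
  have "1 * Tp n a m kk k z = ((\<Prod>j\<in>{1..n}. chi z (c j) ^ kk j) * cnj (chi z \<mu>) ^ k) * Tp n a m kk k z"
    using Tp_scale[OF z c mu] by simp
  then show ?thesis using nz by (metis mult_right_cancel)
qed

lemma Tp_vanish:
  assumes z: "z \<in> RR" and nz: "Tp n a m kk k z \<noteq> 0"
  shows "z ^ d_of (card (UNIV::'a set)) n kk m k = 1"
proof -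
  have z0: "z \<noteq> 0" using RR_nz[OF z] .
  define M where "M = Lcm (m ` {1..n})"
  have mdvd: "m j dvd M" if "j \<in> {1..n}" for j unfolding M_def using that by (intro dvd_Lcm) simp
  define E1 where "E1 = (\<Sum>j\<in>{1..n}. kk j * (M div m j))"
  define E2 where "E2 = k * M"
  have cM: "\<forall>j\<in>{1..n}. g ^ (M div m j) \<noteq> 0 \<and> (g ^ (M div m j)) ^ m j = g ^ M"
  proof
    fix j assume j: "j \<in> {1..n}"
    have "(M div m j) * m j = M" using mdvd[OF j] by simp
    then show "g ^ (M div m j) \<noteq> 0 \<and> (g ^ (M div m j)) ^ m j = g ^ M"
      using g0 by (simp flip: power_mult)
  qed
  have K1: "(\<Prod>j\<in>{1..n}. chi z (g ^ (M div m j)) ^ kk j) * cnj (chi z (g ^ M)) ^ k = 1"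
    using K_one[OF z nz cM] g0 by simp
  have "(\<Prod>j\<in>{1..n}. chi z (g ^ (M div m j)) ^ kk j) = (\<Prod>j\<in>{1..n}. z ^ (kk j * (M div m j)))"
    by (rule prod.cong) (simp_all add: chi_gpow[OF z] flip: power_mult, simp add: mult.commute)
  also have "\<dots> = z ^ E1" unfolding E1_def by (simp add: power_sum)
  finally have "z ^ E1 * cnj z ^ E2 = 1" using K1 chi_gpow[OF z, of M]
    by (simp add: E2_def power_mult mult.commute)
  then have "z ^ E1 * (cnj z * z) ^ E2 = z ^ E2"
    by (metis (no_types, lifting) mult.assoc mult.left_neutral power_mult_distrib)
  then have iE: "z powi (int E1 - int E2) = 1"
    using RR_cnj[OF z] z0 by (simp add: power_int_diff)
  have iG: "z ^ (kk j * NN div gcd (m j) NN) = 1" if j: "j \<in> {1..n}" for j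
  proof -
    define dj where "dj = gcd (m j) NN"
    have dj1: "dj dvd NN" "dj dvd m j" by (simp_all add: dj_def)
    define c where "c i = (if i = j then g ^ (NN div dj) else 1)" for i
    have cc: "\<forall>i\<in>{1..n}. c i \<noteq> 0 \<and> c i ^ m i = 1"
    proof
      fix i assume "i \<in> {1..n}"
      have "(NN div dj) * m j = NN * (m j div dj)"
        using dj1 by (metis div_mult_swap mult.commute)
      then have "(g ^ (NN div dj)) ^ m j = (g ^ NN) ^ (m j div dj)" by (simp flip: power_mult)
      then have "(g ^ (NN div dj)) ^ m j = 1" using gN by simp
      then show "c i \<noteq> 0 \<and> c i ^ m i = 1" using g0 by (simp add: c_def)
    qed
    have K2: "(\<Prod>i\<in>{1..n}. chi z (c i) ^ kk i) * cnj (chi z 1) ^ k = 1"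
      using K_one[OF z nz cc] by simp
    have "(\<Prod>i\<in>{1..n}. chi z (c i) ^ kk i) = (\<Prod>i\<in>{1..n}. if i = j then (z ^ (NN div dj)) ^ kk j else 1)"
      by (rule prod.cong) (simp_all add: c_def chi_gpow[OF z] chi_one[OF z])
    also have "\<dots> = (z ^ (NN div dj)) ^ kk j" using j by simp
    finally have "(z ^ (NN div dj)) ^ kk j = 1" using K2 chi_one[OF z] by simp
    moreover have "kk j * NN div dj = (NN div dj) * kk j" using dj1 by (metis div_mult_swap mult.commute)
    ultimately show ?thesis by (simp add: dj_def power_mult)
  qed
  have iG': "z ^ Gcd ((\<lambda>j. kk j * NN div gcd (m j) NN) ` {1..n}) = 1"
    using iG z0 by (intro pow_Gcd) auto
  define d' where "d' = gcd (gcd (int E1 - int E2) (int NN)) (int (Gcd ((\<lambda>j. kk j * NN div gcd (m j) NN) ` {1..n})))"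
  have "z powi d' = 1" unfolding d'_def
    using powi_gcd[OF z0 powi_gcd[OF z0 iE] ] gN iG' z RR_def by (simp add: RR_def)
  moreover have "d_of (card (UNIV::'a set)) n kk m k = nat d'"
    unfolding d_of_def d'_def E1_def E2_def M_def NN_def by (simp add: Let_def of_nat_sum)
  moreover have "d' \<ge> 0" unfolding d'_def by simp
  ultimately show ?thesis by (metis power_int_of_nat int_nat_eq)
qed

end



context ffc
begin

lemma prod_nz:
  fixes n :: nat
  assumes "x \<in> Pi\<^sub>E {1..n} (\<lambda>_. UNIV - {0::'a})"
  shows "(\<Prod>j\<in>{1..n}. x j ^ kk j) \<noteq> 0"
proof -
  have "\<forall>j\<in>{1..n}. x j \<noteq> 0" using assms by (auto simp: PiE_iff)
  then show ?thesis by auto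
qed

lemma inner_sum:
  assumes z0: "b \<noteq> 0" and x: "x \<in> Pi\<^sub>E {1..n} (\<lambda>_. UNIV - {0::'a})" and D: "diag_form n a m x \<noteq> 0"
  shows "(\<Sum>z\<in>RR. chi z b * ((\<Prod>j\<in>{1..n}. chi z (x j) ^ kk j) * cnj (chi z (diag_form n a m x)) ^ k))
       = (if diag_form n a m x ^ k = b * (\<Prod>j\<in>{1..n}. x j ^ kk j) then of_nat NN else 0)"
proof -
  define u where "u = b * (\<Prod>j\<in>{1..n}. x j ^ kk j)"
  define v where "v = diag_form n a m x ^ k"
  have u0: "u \<noteq> 0" using prod_nz[OF x] z0 by (simp add: u_def)
  have v0: "v \<noteq> 0" using D by (simp add: v_def)
  have w0: "u / v \<noteq> 0" using u0 v0 by simp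
  have tm: "chi z b * ((\<Prod>j\<in>{1..n}. chi z (x j) ^ kk j) * cnj (chi z (diag_form n a m x)) ^ k) = chi z (u / v)"
    if z: "z \<in> RR" for z
  proof -
    have "chi z b * (\<Prod>j\<in>{1..n}. chi z (x j) ^ kk j) = chi z u"
      by (simp add: u_def chi_mult[OF z] chi_prod[OF z] chi_power[OF z])
    moreover have "cnj (chi z (diag_form n a m x)) ^ k = cnj (chi z v)"
      by (simp add: v_def chi_power[OF z])
    moreover have "chi z u = chi z (u / v) * chi z v"
      using v0 chi_mult[OF z, of "u / v" v] by simp
    ultimately have "chi z b * ((\<Prod>j\<in>{1..n}. chi z (x j) ^ kk j) * cnj (chi z (diag_form n a m x)) ^ k)
        = chi z (u / v) * (cnj (chi z v) * chi z v)"
      by (simp add: algebra_simps)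
    then show ?thesis using chi_cnj[OF z v0] by simp
  qed
  have "(\<Sum>z\<in>RR. chi z b * ((\<Prod>j\<in>{1..n}. chi z (x j) ^ kk j) * cnj (chi z (diag_form n a m x)) ^ k))
      = (\<Sum>z\<in>RR. chi z (u / v))" by (rule sum.cong[OF refl]) (rule tm)
  also have "\<dots> = (if u / v = 1 then of_nat NN else 0)" by (rule orth[OF w0])
  also have "(u / v = 1) \<longleftrightarrow> (v = u)" using v0 by auto
  finally show ?thesis by (simp add: u_def v_def)
qed

lemma card_B:
  assumes b0: "b \<noteq> 0"
  shows "of_nat (card {x \<in> Pi\<^sub>E {1..n} (\<lambda>_. UNIV - {0::'a}). diag_form n a m x \<noteq> 0
             \<and> diag_form n a m x ^ k = b * (\<Prod>j\<in>{1..n}. x j ^ kk j)})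
       = (\<Sum>z\<in>RR. chi z b * T_sum n a m kk k (chi z))"
proof -
  define S where "S = {x \<in> Pi\<^sub>E {1..n} (\<lambda>_. UNIV - {0::'a}). diag_form n a m x \<noteq> 0}"
  define f where "f z x = chi z b * ((\<Prod>j\<in>{1..n}. chi z (x j) ^ kk j) * cnj (chi z (diag_form n a m x)) ^ k)"
    for z x
  define P where "P x \<longleftrightarrow> diag_form n a m x ^ k = b * (\<Prod>j\<in>{1..n}. x j ^ kk j)" for x
  have NN0: "(of_nat NN :: complex) \<noteq> 0" using NN_pos by simp
  have finS: "finite S" unfolding S_def
    by (rule finite_subset[of _ "Pi\<^sub>E {1..n} (\<lambda>_. UNIV - {0})"]) (auto intro: finite_PiE)
  have "(\<Sum>z\<in>RR. chi z b * T_sum n a m kk k (chi z)) = (\<Sum>z\<in>RR. (\<Sum>x\<in>S. f z x) / of_nat NN)"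
    by (rule sum.cong) (simp_all add: T_sum_chi Tp_def f_def S_def sum_distrib_left)
  also have "\<dots> = (\<Sum>z\<in>RR. \<Sum>x\<in>S. f z x) / of_nat NN" by (simp add: sum_divide_distrib)
  also have "(\<Sum>z\<in>RR. \<Sum>x\<in>S. f z x) = (\<Sum>x\<in>S. \<Sum>z\<in>RR. f z x)" by (rule sum.swap)
  also have "\<dots> = (\<Sum>x\<in>S. if P x then of_nat NN else 0)"
  proof (rule sum.cong)
    fix x assume "x \<in> S"
    then have x: "x \<in> Pi\<^sub>E {1..n} (\<lambda>_. UNIV - {0::'a})" "diag_form n a m x \<noteq> 0" unfolding S_def by blast+
    show "(\<Sum>z\<in>RR. f z x) = (if P x then of_nat NN else 0)"
      unfolding f_def P_def by (rule inner_sum[OF b0 x])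
  qed simp
  also have "\<dots> = of_nat NN * (\<Sum>x\<in>S. if P x then 1 else 0)"
    by (simp add: sum_distrib_left if_distrib cong: if_cong)
  also have "(\<Sum>x\<in>S. if P x then 1 else 0) = (\<Sum>x\<in>{x \<in> S. P x}. (1::complex))"
    using finS by (rule sum.inter_filter[symmetric])
  also have "\<dots> = of_nat (card {x \<in> S. P x})" by simp
  finally have e: "(\<Sum>z\<in>RR. chi z b * T_sum n a m kk k (chi z)) = of_nat (card {x \<in> S. P x})"
    using NN0 by simp
  have "{x \<in> S. P x} = {x \<in> Pi\<^sub>E {1..n} (\<lambda>_. UNIV - {0::'a}). diag_form n a m x \<noteq> 0
             \<and> diag_form n a m x ^ k = b * (\<Prod>j\<in>{1..n}. x j ^ kk j)}"
    unfolding S_def P_def by blast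
  then show ?thesis using e by simp
qed

end



context ffc
begin

lemma k0_props:
  fixes n k :: nat and kk :: "nat \<Rightarrow> nat" and m :: "nat \<Rightarrow> nat"
  assumes hk: "k > 0"
  shows "k0_of (card (UNIV :: 'a set)) n kk k > 0"
    and "k0_of (card (UNIV :: 'a set)) n kk k dvd NN"
    and "k0_of (card (UNIV :: 'a set)) n kk k dvd k"
    and "\<And>j. j \<in> {1..n} \<Longrightarrow> k0_of (card (UNIV :: 'a set)) n kk k dvd kk j"
    and "k0_of (card (UNIV :: 'a set)) n kk k dvd d_of (card (UNIV :: 'a set)) n kk m k"
proof -
  define k0 where "k0 = k0_of (card (UNIV :: 'a set)) n kk k"
  have k0e: "k0 = gcd (gcd k NN) (Gcd (kk ` {1..n}))" by (simp add: k0_def k0_of_def NN_def)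
  show "k0_of (card (UNIV :: 'a set)) n kk k > 0" using hk by (simp flip: k0_def add: k0e)
  have dN: "k0 dvd NN" unfolding k0e by (meson dvd_trans gcd_dvd1 gcd_dvd2)
  have dk: "k0 dvd k" unfolding k0e by (meson dvd_trans gcd_dvd1)
  have dkk: "k0 dvd kk j" if "j \<in> {1..n}" for j
  proof -
    have "Gcd (kk ` {1..n}) dvd kk j" using that by (intro Gcd_dvd) simp
    then show ?thesis unfolding k0e by (meson dvd_trans gcd_dvd2)
  qed
  show "k0_of (card (UNIV :: 'a set)) n kk k dvd NN" using dN by (simp add: k0_def)
  show "k0_of (card (UNIV :: 'a set)) n kk k dvd k" using dk by (simp add: k0_def)
  show "\<And>j. j \<in> {1..n} \<Longrightarrow> k0_of (card (UNIV :: 'a set)) n kk k dvd kk j" using dkk by (simp add: k0_def)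
  define M where "M = Lcm (m ` {1..n})"
  define X where "X = gcd (gcd ((\<Sum>j\<in>{1..n}. int (kk j * (M div m j))) - int (k * M)) (int NN))
               (int (Gcd ((\<lambda>j. kk j * NN div gcd (m j) NN) ` {1..n})))"
  have de: "d_of (card (UNIV :: 'a set)) n kk m k = nat X"
    by (simp add: d_of_def X_def M_def NN_def Let_def)
  have X0: "X \<ge> 0" by (simp add: X_def)
  have "int k0 dvd (\<Sum>j\<in>{1..n}. int (kk j * (M div m j)))"
  proof (rule dvd_sum)
    fix j assume "j \<in> {1..n}"
    then show "int k0 dvd int (kk j * (M div m j))" using dkk by (simp add: int_dvd_int_iff)
  qed
  moreover have "int k0 dvd int (k * M)" using dk by (simp add: int_dvd_int_iff)
  ultimately have a1: "int k0 dvd (\<Sum>j\<in>{1..n}. int (kk j * (M div m j))) - int (k * M)" by (rule dvd_diff)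
  have a2: "int k0 dvd int NN" using dN by (simp add: int_dvd_int_iff)
  have "k0 dvd Gcd ((\<lambda>j. kk j * NN div gcd (m j) NN) ` {1..n})"
  proof (rule Gcd_greatest)
    fix c assume "c \<in> (\<lambda>j. kk j * NN div gcd (m j) NN) ` {1..n}"
    then obtain j where j: "j \<in> {1..n}" "c = kk j * NN div gcd (m j) NN" by blast
    have "c = kk j * (NN div gcd (m j) NN)" using j(2) by (simp add: div_mult_swap)
    then show "k0 dvd c" using dkk[OF j(1)] by simp
  qed
  then have a3: "int k0 dvd int (Gcd ((\<lambda>j. kk j * NN div gcd (m j) NN) ` {1..n}))" by (simp add: int_dvd_int_iff)
  have "int k0 dvd X" unfolding X_def using a1 a2 a3 by (simp add: gcd_greatest)
  then have "k0 dvd nat \<bar>X\<bar>" by simp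
  then show "k0_of (card (UNIV :: 'a set)) n kk k dvd d_of (card (UNIV :: 'a set)) n kk m k"
    using X0 de by (simp add: k0_def)
qed

end



context ffc
begin

lemma main:
  fixes a :: "nat \<Rightarrow> 'a" and b :: 'a
    and n k :: nat and kk m :: "nat \<Rightarrow> nat"
  assumes "n \<ge> 2"
    and "\<forall>j\<in>{1..n}. a j \<noteq> 0" and "b \<noteq> 0"
    and "k > 0" and "\<forall>j\<in>{1..n}. kk j > 0" and "\<forall>j\<in>{1..n}. m j > 0"
    and "\<exists>y::'a. y ^ k0_of (card (UNIV :: 'a set)) n kk k = b"
  shows "of_nat (card {x \<in> Pi\<^sub>E {1..n} (\<lambda>_. UNIV).
                   (diag_form n a m x) ^ k = b * (\<Prod>j\<in>{1..n}. x j ^ kk j)})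
       = of_nat (k0_of (card (UNIV :: 'a set)) n kk k) * of_nat ((card (UNIV :: 'a set)) - 1) ^ (n - 1)
         + of_nat (card {x \<in> Pi\<^sub>E {1..n} (\<lambda>_. UNIV). diag_form n a m x = 0})
         - (of_nat (k0_of (card (UNIV :: 'a set)) n kk k) + of_nat (card (UNIV :: 'a set)) - 1) / (of_nat (card (UNIV :: 'a set)) - 1)
           * of_nat (card {x \<in> Pi\<^sub>E {1..n} (\<lambda>_. UNIV - {0}). diag_form n a m x = 0})
         + (\<Sum>\<psi>\<in>{\<psi> \<in> mult_chars. char_pow_trivial \<psi> (d_of (card (UNIV :: 'a set)) n kk m k)
                              \<and> \<not> char_pow_trivial \<psi> (k0_of (card (UNIV :: 'a set)) n kk k)}.
              \<psi> b * T_sum n a m kk k \<psi>)"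
proof -
  note hn = assms(1) and hb = assms(3) and hk = assms(4) and hkk = assms(5) and hy = assms(7)
  define k0 where "k0 = k0_of (card (UNIV :: 'a set)) n kk k"
  define d where "d = d_of (card (UNIV :: 'a set)) n kk m k"
  define D where "D x = diag_form n a m x" for x
  define Pr where "Pr x = (\<Prod>j\<in>{1..n}. x j ^ kk j)" for x :: "nat \<Rightarrow> 'a"
  define Pu where "Pu = Pi\<^sub>E {1..n} (\<lambda>_. UNIV :: 'a set)"
  define Ps where "Ps = Pi\<^sub>E {1..n} (\<lambda>_. UNIV - {0 :: 'a})"
  define Sol where "Sol = {x \<in> Pu. D x ^ k = b * Pr x}"
  define Z where "Z = {x \<in> Pu. D x = 0}"
  define Zs where "Zs = {x \<in> Ps. D x = 0}"
  define S where "S = {x \<in> Ps. D x \<noteq> 0}"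
  define B where "B = {x \<in> Ps. D x \<noteq> 0 \<and> D x ^ k = b * Pr x}"
  define F where "F z = chi z b * T_sum n a m kk k (chi z)" for z
  define NC where "NC = (of_nat NN :: complex)"
  have NC0: "NC \<noteq> 0" using NN_pos by (simp add: NC_def)
  have k0p: "k0 > 0" "k0 dvd NN" "k0 dvd k" "\<And>j. j \<in> {1..n} \<Longrightarrow> k0 dvd kk j" "k0 dvd d"
    using k0_props(1-4)[OF hk, where n=n and kk=kk] k0_props(5)[OF hk, where n=n and kk=kk and m=m]
    by (simp_all add: k0_def d_def)
  have finPu: "finite Pu" unfolding Pu_def by (intro finite_PiE) auto
  have PsPu: "Ps \<subseteq> Pu" unfolding Ps_def Pu_def by (intro PiE_mono) auto
  have finPs: "finite Ps" using finPu PsPu by (rule finite_subset[rotated])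
  have ZsZ: "Zs \<subseteq> Z" using PsPu unfolding Zs_def Z_def by blast
  have finZ: "finite Z" using finPu unfolding Z_def by simp
  have Pr0: "Pr x = 0" if "x \<in> Pu" "x \<notin> Ps" for x
  proof -
    have "\<exists>j\<in>{1..n}. x j = 0" using that unfolding Pu_def Ps_def by (auto simp: PiE_iff)
    then obtain j where j: "j \<in> {1..n}" "x j = 0" by blast
    then have "x j ^ kk j = 0" using hkk by simp
    then show ?thesis unfolding Pr_def using j(1) by (intro prod_zero) auto
  qed
  have Prn: "Pr x \<noteq> 0" if "x \<in> Ps" for x
    using prod_nz[of x n kk] that unfolding Pr_def Ps_def by simp
  have Sol_eq: "Sol = (Z - Zs) \<union> B"
  proof (intro equalityI subsetI)
    fix x assume x: "x \<in> Sol"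
    show "x \<in> (Z - Zs) \<union> B"
    proof (cases "x \<in> Ps")
      case True
      then have "D x ^ k \<noteq> 0" using x hb Prn[OF True] unfolding Sol_def by simp
      then have "D x \<noteq> 0" using hk by (metis zero_power)
      then show ?thesis using x True unfolding Sol_def B_def by blast
    next
      case False
      then have "D x ^ k = 0" using x Pr0 unfolding Sol_def by auto
      then show ?thesis using x False unfolding Sol_def Z_def Zs_def by auto
    qed
  next
    fix x assume "x \<in> (Z - Zs) \<union> B"
    then show "x \<in> Sol"
    proof
      assume x: "x \<in> Z - Zs"
      then have "x \<notin> Ps" "x \<in> Pu" "D x = 0" unfolding Z_def Zs_def by auto
      then show "x \<in> Sol" using Pr0 hk unfolding Sol_def by simp
    next
      assume "x \<in> B"
      then show "x \<in> Sol" using PsPu unfolding B_def Sol_def by auto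
    qed
  qed
  have cardSol: "card Sol = card (Z - Zs) + card B"
    unfolding Sol_eq
  proof (rule card_Un_disjoint)
    show "finite (Z - Zs)" using finZ by simp
    show "finite B" using finPs unfolding B_def by simp
    show "(Z - Zs) \<inter> B = {}" unfolding Z_def Zs_def B_def by auto
  qed
  have cardZ: "card (Z - Zs) = card Z - card Zs" using ZsZ finZ by (simp add: card_Diff_subset finite_subset)
  have cardZle: "card Zs \<le> card Z" using ZsZ finZ by (simp add: card_mono)
  have cardPs: "card Ps = NN ^ n" unfolding Ps_def by (simp add: card_PiE card_U NN_def)
  have cardS: "card S = NN ^ n - card Zs"
  proof -
    have "S = Ps - Zs" unfolding S_def Zs_def by auto
    moreover have "Zs \<subseteq> Ps" unfolding Zs_def by auto
    ultimately show ?thesis using finPs cardPs by (simp add: card_Diff_subset finite_subset)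
  qed
  have cardSle: "card Zs \<le> NN ^ n"
    using cardPs finPs unfolding Zs_def by (metis (no_types, lifting) card_mono mem_Collect_eq subsetI)
  have cardB: "of_nat (card B) = (\<Sum>z\<in>RR. F z)"
    using card_B[OF hb, of n a m k kk] unfolding B_def F_def D_def Pr_def Ps_def by simp
  have F1: "F z = of_nat (card S) / NC" if z: "z \<in> RR" "z ^ k0 = 1" for z
  proof -
    obtain y where y: "y ^ k0 = b" using hy k0_def by blast
    have y0: "y \<noteq> 0" using y hb k0p(1) by (metis zero_power)
    have cb: "chi z b = 1" using y chi_power[OF z(1), of y k0] chi_triv_iff[OF z(1), of k0] z(2) y0 by simp
    have pw: "z ^ e = 1" if he: "k0 dvd e" for e
    proof -
      obtain r where "e = k0 * r" using he by blast
      then show ?thesis using z(2) by (simp add: power_mult)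
    qed
    have "Tp n a m kk k z = (\<Sum>x\<in>S. 1)" unfolding Tp_def
    proof (rule sum.cong)
      show "{x \<in> Pi\<^sub>E {1..n} (\<lambda>_. UNIV - {0}). diag_form n a m x \<noteq> 0} = S"
        unfolding S_def Ps_def D_def by simp
    next
      fix x assume "x \<in> S"
      then have x: "\<forall>j\<in>{1..n}. x j \<noteq> 0" "D x \<noteq> 0" unfolding S_def Ps_def by (auto simp: PiE_iff)
      have "(\<Prod>j\<in>{1..n}. chi z (x j) ^ kk j) = (\<Prod>j\<in>{1..n}. 1)"
      proof (rule prod.cong[OF refl])
        fix j assume j: "j \<in> {1..n}"
        have "z ^ kk j = 1" using pw k0p(4)[OF j] by simp
        then show "chi z (x j) ^ kk j = 1" using chi_triv_iff[OF z(1), of "kk j"] x(1) j by blast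
      qed
      moreover have "chi z (D x) ^ k = 1" using chi_triv_iff[OF z(1), of k] pw[OF k0p(3)] x(2) by blast
      ultimately show "(\<Prod>j\<in>{1..n}. chi z (x j) ^ kk j) * cnj (chi z (diag_form n a m x)) ^ k = 1"
        unfolding D_def by (simp flip: complex_cnj_power)
    qed
    then show ?thesis unfolding F_def using cb by (simp add: T_sum_chi NC_def)
  qed
  have F3: "F z = 0" if z: "z \<in> RR" "z ^ d \<noteq> 1" for z
  proof -
    have "Tp n a m kk k z = 0" using Tp_vanish[OF z(1)] z(2) unfolding d_def by blast
    then show ?thesis unfolding F_def by (simp add: T_sum_chi)
  qed
  have split: "(\<Sum>z\<in>RR. F z) = (\<Sum>z\<in>RR. if z ^ k0 = 1 then F z else 0)
         + (\<Sum>z\<in>RR. if z ^ d = 1 \<and> z ^ k0 \<noteq> 1 then F z else 0)"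
    unfolding sum.distrib[symmetric]
  proof (rule sum.cong[OF refl])
    fix z assume z: "z \<in> RR"
    show "F z = (if z ^ k0 = 1 then F z else 0) + (if z ^ d = 1 \<and> z ^ k0 \<noteq> 1 then F z else 0)"
      using F3[OF z] by auto
  qed
  have R1: "{z \<in> RR. z ^ k0 = 1} = {z. z ^ k0 = 1}"
  proof -
    have "z ^ NN = 1" if hz: "z ^ k0 = 1" for z :: complex
    proof -
      obtain r where "NN = k0 * r" using k0p(2) by blast
      then show ?thesis using hz by (simp add: power_mult)
    qed
    then show ?thesis unfolding RR_def by auto
  qed
  have sum1: "(\<Sum>z\<in>RR. if z ^ k0 = 1 then F z else 0) = of_nat k0 * (of_nat (card S) / NC)"
  proof -
    have "(\<Sum>z\<in>RR. if z ^ k0 = 1 then F z else 0) = (\<Sum>z\<in>{z \<in> RR. z ^ k0 = 1}. F z)"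
      using RR_fin by (rule sum.inter_filter[symmetric])
    also have "\<dots> = (\<Sum>z\<in>{z \<in> RR. z ^ k0 = 1}. of_nat (card S) / NC)"
      by (rule sum.cong[OF refl]) (rule F1, auto)
    also have "\<dots> = of_nat (card {z \<in> RR. z ^ k0 = 1}) * (of_nat (card S) / NC)" by simp
    also have "card {z \<in> RR. z ^ k0 = 1} = k0" unfolding R1 using k0p(1) by (rule card_roots_unity_eq)
    finally show ?thesis .
  qed
  have finMC: "finite (mult_chars :: ('a \<Rightarrow> complex) set)"
    using bij_betw_finite[OF chi_bij] RR_fin by simp
  have sum2: "(\<Sum>z\<in>RR. if z ^ d = 1 \<and> z ^ k0 \<noteq> 1 then F z else 0)
      = (\<Sum>\<psi>\<in>{\<psi> \<in> mult_chars. char_pow_trivial \<psi> d \<and> \<not> char_pow_trivial \<psi> k0}. \<psi> b * T_sum n a m kk k \<psi>)"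
  proof -
    have "(\<Sum>\<psi>\<in>{\<psi> \<in> mult_chars. char_pow_trivial \<psi> d \<and> \<not> char_pow_trivial \<psi> k0}. \<psi> b * T_sum n a m kk k \<psi>)
        = (\<Sum>\<psi>\<in>mult_chars. if char_pow_trivial \<psi> d \<and> \<not> char_pow_trivial \<psi> k0 then \<psi> b * T_sum n a m kk k \<psi> else 0)"
      using finMC by (rule sum.inter_filter)
    also have "\<dots> = (\<Sum>z\<in>RR. if char_pow_trivial (chi z) d \<and> \<not> char_pow_trivial (chi z) k0 then chi z b * T_sum n a m kk k (chi z) else 0)"
      by (rule sum.reindex_bij_betw[OF chi_bij, symmetric])
    also have "\<dots> = (\<Sum>z\<in>RR. if z ^ d = 1 \<and> z ^ k0 \<noteq> 1 then F z else 0)"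
    proof (rule sum.cong[OF refl])
      fix z assume z: "z \<in> RR"
      show "(if char_pow_trivial (chi z) d \<and> \<not> char_pow_trivial (chi z) k0 then chi z b * T_sum n a m kk k (chi z) else 0)
          = (if z ^ d = 1 \<and> z ^ k0 \<noteq> 1 then F z else 0)"
        using chi_triv_iff[OF z, of d] chi_triv_iff[OF z, of k0] unfolding char_pow_trivial_def F_def by simp
    qed
    finally show ?thesis by simp
  qed
  have q1: "(of_nat (card (UNIV :: 'a set)) :: complex) - 1 = NC"
    using card_ff_ge2[where 'a='a] by (simp add: NC_def NN_def of_nat_diff)
  have q2: "(of_nat (card (UNIV :: 'a set) - 1) :: complex) = NC" by (simp add: NC_def NN_def)
  have npow: "NC ^ n = NC * NC ^ (n - 1)" using hn by (metis Suc_diff_1 less_le_trans pos2 power_Suc)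
  have "of_nat (card Sol) = (of_nat (card Z) - of_nat (card Zs)) + of_nat k0 * ((NC ^ n - of_nat (card Zs)) / NC)
      + (\<Sum>\<psi>\<in>{\<psi> \<in> mult_chars. char_pow_trivial \<psi> d \<and> \<not> char_pow_trivial \<psi> k0}. \<psi> b * T_sum n a m kk k \<psi>)"
    using cardSol cardZ cardZle cardB split sum1 sum2 cardS cardSle
    by (simp add: of_nat_diff NC_def)
  also have "\<dots> = of_nat k0 * NC ^ (n - 1) + of_nat (card Z) - (of_nat k0 + NC) / NC * of_nat (card Zs)
      + (\<Sum>\<psi>\<in>{\<psi> \<in> mult_chars. char_pow_trivial \<psi> d \<and> \<not> char_pow_trivial \<psi> k0}. \<psi> b * T_sum n a m kk k \<psi>)"
    unfolding npow using NC0 by (simp add: field_simps)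
  finally have fin: "of_nat (card Sol) = of_nat k0 * NC ^ (n - 1) + of_nat (card Z) - (of_nat k0 + NC) / NC * of_nat (card Zs)
      + (\<Sum>\<psi>\<in>{\<psi> \<in> mult_chars. char_pow_trivial \<psi> d \<and> \<not> char_pow_trivial \<psi> k0}. \<psi> b * T_sum n a m kk k \<psi>)" .
  have e: "(of_nat k0 + of_nat (card (UNIV :: 'a set)) - 1 :: complex) = of_nat k0 + NC"
    by (metis q1 add_diff_eq)
  show ?thesis
    unfolding k0_def[symmetric] d_def[symmetric] e q1 q2
    using fin unfolding Sol_def Z_def Zs_def Pu_def Ps_def D_def Pr_def .
qed

end

theorem corollary1:
  fixes a :: "nat \<Rightarrow> 'a::{finite,field}" and b :: 'a
    and n k :: nat and kk m :: "nat \<Rightarrow> nat"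
  assumes "n \<ge> 2"
    and "\<forall>j\<in>{1..n}. a j \<noteq> 0" and "b \<noteq> 0"
    and "k > 0" and "\<forall>j\<in>{1..n}. kk j > 0" and "\<forall>j\<in>{1..n}. m j > 0"
    and "\<exists>y::'a. y ^ k0_of (card (UNIV :: 'a set)) n kk k = b"
  shows "of_nat (card {x \<in> Pi\<^sub>E {1..n} (\<lambda>_. UNIV).
                   (diag_form n a m x) ^ k = b * (\<Prod>j\<in>{1..n}. x j ^ kk j)})
       = of_nat (k0_of (card (UNIV :: 'a set)) n kk k) * of_nat ((card (UNIV :: 'a set)) - 1) ^ (n - 1)
         + of_nat (card {x \<in> Pi\<^sub>E {1..n} (\<lambda>_. UNIV). diag_form n a m x = 0})
         - (of_nat (k0_of (card (UNIV :: 'a set)) n kk k) + of_nat (card (UNIV :: 'a set)) - 1) / (of_nat (card (UNIV :: 'a set)) - 1)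
           * of_nat (card {x \<in> Pi\<^sub>E {1..n} (\<lambda>_. UNIV - {0}). diag_form n a m x = 0})
         + (\<Sum>\<psi>\<in>{\<psi> \<in> mult_chars. char_pow_trivial \<psi> (d_of (card (UNIV :: 'a set)) n kk m k)
                              \<and> \<not> char_pow_trivial \<psi> (k0_of (card (UNIV :: 'a set)) n kk k)}.
              \<psi> b * T_sum n a m kk k \<psi>)"
proof -
  obtain g :: 'a where g: "g \<noteq> 0" "\<forall>y. y \<noteq> 0 \<longrightarrow> (\<exists>i. y = g ^ i)" using ff_gen by blast
  interpret ffc g using g by unfold_locales blast+
  show ?thesis using main[OF assms] .
qed

end
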